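(* Let $$\tilde{\mathcal{K}}_1(x,y)=\prod_{m=1}^N\prod_{n=1}^{N-1}[2\cosh(\mu(x_m-y_n)/2)]^{-g/\hbar},\qquad x\in\mathbb{R}^N,\ y\in\mathbb{R}^{N-1}.$$ Then $$:\hat\Sigma_N(L_{\rm nr}+E)(x):\ \tilde{\mathcal{K}}_1(x,y)=0,$$ and for $k=1,\ldots,N-1$, $$\Big(:\hat\Sigma_k(L_{\rm nr}+E)(x):-:\hat\Sigma_k(L_{\rm nr}+E)(-y):\Big)\tilde{\mathcal{K}}_1(x,y)=0,$$ for $x,y$ with pairwise distinct coordinates.
   Context: Fix $\hbar,\mu,g>0$. For $n$ variables $x=(x_1,\ldots,x_n)$ and momenta $p$, let $L_{\rm nr}(x,p)_{jk}=\delta_{jk}p_j+(1-\delta_{jk})\frac{i\mu g}{2\sinh(\mu(x_j-x_k)/2)}$ and $E(x)=\mathrm{diag}(z_1(x),\ldots,z_n(x))$ with $z_j(x)=-\frac{i\mu g}{2}\sum_{k\ne j}\coth(\mu(x_j-x_k)/2)$. $\Sigma_k(M)$ is the sum of the principal $k\times k$ minors of $M$. The operator $:\hat\Sigma_k(L_{\rm nr}+E)(x):$ is obtained from $\Sigma_k(L_{\rm nr}(x,p)+E(x))$ by writing $x$-dependent coefficients to the left of monomials in $p$ and substituting $p_m\to-i\hbar\partial_{x_m}$. The operator $:\hat\Sigma_k(L_{\rm nr}+E)(-y):$ (in the $N-1$ variables $y$) is obtained from the one in variables $x=(x_1,\ldots,x_{N-1})$ by the substitution $x=-y$ (coefficients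 evaluated at $-y$, $\partial_{x_m}$ replaced by $-\partial_{y_m}$). *)

theory Defs
  imports "HOL-Analysis.Analysis"
begin

text \<open>Points of R^n are represented as functions nat => real; only the
coordinates 0..n-1 are used (0-based indexing of the paper's x_1..x_n).\<close>

definition coth :: "real \<Rightarrow> real" where
  "coth t = cosh t / sinh t"

text \<open>Off-diagonal entries of L_nr (they do not involve momenta).\<close>
definition Lnr_off :: "real \<Rightarrow> real \<Rightarrow> (nat \<Rightarrow> real) \<Rightarrow> nat \<Rightarrow> nat \<Rightarrow> complex" where
  "Lnr_off mu g x j l =
     \<i> * complex_of_real (mu * g) / complex_of_real (2 * sinh (mu * (x j - x l) / 2))"

definition zE :: "real \<Rightarrow> real \<Rightarrow> nat \<Rightarrow> (nat \<Rightarrow> real) \<Rightarrow> nat \<Rightarrow> complex" where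
  "zE mu g n x j =
     - (\<i> * complex_of_real (mu * g) / 2) *
       (\<Sum>l\<in>{..<n} - {j}. complex_of_real (coth (mu * (x j - x l) / 2)))"

definition pdiff :: "nat \<Rightarrow> ((nat \<Rightarrow> real) \<Rightarrow> complex) \<Rightarrow> (nat \<Rightarrow> real) \<Rightarrow> complex" where
  "pdiff j f x = vector_derivative (\<lambda>t. f (x(j := t))) (at (x j))"

definition pdiffs :: "nat set \<Rightarrow> ((nat \<Rightarrow> real) \<Rightarrow> complex) \<Rightarrow> (nat \<Rightarrow> real) \<Rightarrow> complex" where
  "pdiffs S f = foldr pdiff (sorted_list_of_set S) f"

text \<open>Sigma_k(L_nr(x,p)+E(x)) = sum over k-subsets I of the Leibniz expansion of the
principal minor on I.  The diagonal entry j is p_j + z_j(x); expanding, each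
term is a squarefree monomial prod_{j in S} p_j (S a set of fixed points of the
permutation) with x-dependent coefficient.  sigma_coeff n k S x is the total
coefficient of the monomial prod_{j in S} p_j.\<close>
definition sigma_coeff :: "real \<Rightarrow> real \<Rightarrow> nat \<Rightarrow> nat \<Rightarrow> nat set \<Rightarrow> (nat \<Rightarrow> real) \<Rightarrow> complex" where
  "sigma_coeff mu g n k S x =
     (\<Sum>I\<in>{I. I \<subseteq> {..<n} \<and> card I = k \<and> S \<subseteq> I}.
        \<Sum>\<sigma>\<in>{\<sigma>. \<sigma> permutes I \<and> (\<forall>j\<in>S. \<sigma> j = j)}.
          of_int (sign \<sigma>) *
          (\<Prod>j\<in>I - S. if \<sigma> j = j then zE mu g n x j else Lnr_off mu g x j (\<sigma> j)))"

text \<open>The normal ordered operator :Sigma_k(L_nr+E)(x): (coefficients to the left,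
p_m -> -i hbar d/dx_m), applied to f and evaluated at x.\<close>
definition sigma_op ::
  "real \<Rightarrow> real \<Rightarrow> real \<Rightarrow> nat \<Rightarrow> nat \<Rightarrow> ((nat \<Rightarrow> real) \<Rightarrow> complex) \<Rightarrow> (nat \<Rightarrow> real) \<Rightarrow> complex" where
  "sigma_op hb mu g n k f x =
     (\<Sum>S\<in>Pow {..<n}. sigma_coeff mu g n k S x * (- \<i> * complex_of_real hb) ^ card S * pdiffs S f x)"

text \<open>The operator :Sigma_k(L_nr+E)(-y): : coefficients evaluated at -y and
d/dx_m replaced by -d/dy_m.\<close>
definition sigma_op_neg ::
  "real \<Rightarrow> real \<Rightarrow> real \<Rightarrow> nat \<Rightarrow> nat \<Rightarrow> ((nat \<Rightarrow> real) \<Rightarrow> complex) \<Rightarrow> (nat \<Rightarrow> real) \<Rightarrow> complex" where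
  "sigma_op_neg hb mu g n k f y =
     (\<Sum>S\<in>Pow {..<n}. sigma_coeff mu g n k S (\<lambda>j. - y j) * (- \<i> * complex_of_real hb) ^ card S
         * (-1) ^ card S * pdiffs S f y)"

definition K1 :: "real \<Rightarrow> real \<Rightarrow> real \<Rightarrow> nat \<Rightarrow> (nat \<Rightarrow> real) \<Rightarrow> (nat \<Rightarrow> real) \<Rightarrow> complex" where
  "K1 hb mu g N x y =
     complex_of_real (\<Prod>m<N. \<Prod>n<N - 1. (2 * cosh (mu * (x m - y n) / 2)) powr (- g / hb))"

end

theory Submission
  imports Defs "Jordan_Normal_Form.Determinant" "HOL-Computational_Algebra.Polynomial"
begin

definition detI :: "nat set \<Rightarrow> (nat \<Rightarrow> nat \<Rightarrow> 'a::comm_ring_1) \<Rightarrow> 'a" where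
  "detI I M = (\<Sum>\<sigma>\<in>{\<sigma>. \<sigma> permutes I}. of_int (sign \<sigma>) * (\<Prod>j\<in>I. M j (\<sigma> j)))"

definition Ek :: "nat \<Rightarrow> nat \<Rightarrow> (nat \<Rightarrow> nat \<Rightarrow> 'a::comm_ring_1) \<Rightarrow> 'a" where
  "Ek n k M = (\<Sum>I\<in>{I. I \<subseteq> {..<n} \<and> card I = k}. detI I M)"

lemma permutes_fix_eq:
  assumes "S \<subseteq> I"
  shows "{\<sigma>. \<sigma> permutes I \<and> (\<forall>j\<in>S. \<sigma> j = j)} = {\<sigma>. \<sigma> permutes (I - S)}"
proof -
  have 1: "\<sigma> permutes (I - S)" if a: "\<sigma> permutes I" "\<forall>j\<in>S. \<sigma> j = j" for \<sigma>
    unfolding permutes_def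
  proof (intro conjI allI impI)
    fix x assume "x \<notin> I - S" thus "\<sigma> x = x" using a permutes_not_in[of \<sigma> I x] by auto
  next
    fix y show "\<exists>!x. \<sigma> x = y" using a unfolding permutes_def by blast
  qed
  have 2: "\<sigma> permutes I \<and> (\<forall>j\<in>S. \<sigma> j = j)" if a: "\<sigma> permutes (I - S)" for \<sigma>
    using permutes_subset[OF a, of I] permutes_not_in[OF a] by auto
  show ?thesis using 1 2 by blast
qed

lemma detI_expand:
  fixes M :: "nat \<Rightarrow> nat \<Rightarrow> 'a::comm_ring_1"
  assumes fin: "finite I"
  shows "detI I (\<lambda>j l. M j l + (if j = l then q j else 0))
       = (\<Sum>S\<in>Pow I. (\<Prod>j\<in>S. q j) * detI (I - S) M)"
proof -
  let ?P = "{\<sigma>. \<sigma> permutes I}"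
  have "detI I (\<lambda>j l. M j l + (if j = l then q j else 0))
      = (\<Sum>\<sigma>\<in>?P. of_int (sign \<sigma>) * (\<Prod>j\<in>I. (if \<sigma> j = j then q j else 0) + M j (\<sigma> j)))"
    unfolding detI_def by (intro sum.cong refl arg_cong2[where f="(*)"] prod.cong) (auto simp: add.commute)
  also have "\<dots> = (\<Sum>\<sigma>\<in>?P. \<Sum>S\<in>Pow I. of_int (sign \<sigma>) *
        ((\<Prod>j\<in>S. if \<sigma> j = j then q j else 0) * (\<Prod>j\<in>I - S. M j (\<sigma> j))))"
    by (simp add: prod_add[OF fin] sum_distrib_left)
  also have "\<dots> = (\<Sum>S\<in>Pow I. \<Sum>\<sigma>\<in>?P. of_int (sign \<sigma>) *
        ((\<Prod>j\<in>S. if \<sigma> j = j then q j else 0) * (\<Prod>j\<in>I - S. M j (\<sigma> j))))"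
    by (rule sum.swap)
  also have "\<dots> = (\<Sum>S\<in>Pow I. (\<Prod>j\<in>S. q j) * detI (I - S) M)"
  proof (intro sum.cong refl)
    fix S assume S: "S \<in> Pow I"
    have finP: "finite ?P" using finite_permutations[OF fin] by simp
    have "(\<Sum>\<sigma>\<in>?P. of_int (sign \<sigma>) *
        ((\<Prod>j\<in>S. if \<sigma> j = j then q j else 0) * (\<Prod>j\<in>I - S. M j (\<sigma> j))))
      = (\<Sum>\<sigma>\<in>{\<sigma>\<in>?P. \<forall>j\<in>S. \<sigma> j = j}. of_int (sign \<sigma>) *
        ((\<Prod>j\<in>S. q j) * (\<Prod>j\<in>I - S. M j (\<sigma> j))))"
    proof -
      have "(\<Sum>\<sigma>\<in>?P. of_int (sign \<sigma>) *
        ((\<Prod>j\<in>S. if \<sigma> j = j then q j else 0) * (\<Prod>j\<in>I - S. M j (\<sigma> j))))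
        = (\<Sum>\<sigma>\<in>?P. if (\<forall>j\<in>S. \<sigma> j = j) then of_int (sign \<sigma>) *
        ((\<Prod>j\<in>S. q j) * (\<Prod>j\<in>I - S. M j (\<sigma> j))) else 0)"
      proof (intro sum.cong refl)
        fix \<sigma> show "of_int (sign \<sigma>) *
        ((\<Prod>j\<in>S. if \<sigma> j = j then q j else 0) * (\<Prod>j\<in>I - S. M j (\<sigma> j))) =
         (if (\<forall>j\<in>S. \<sigma> j = j) then of_int (sign \<sigma>) *
        ((\<Prod>j\<in>S. q j) * (\<Prod>j\<in>I - S. M j (\<sigma> j))) else 0)"
        proof (cases "\<forall>j\<in>S. \<sigma> j = j")
          case True thus ?thesis by (auto intro!: prod.cong)
        next
          case False
          then obtain j where "j \<in> S" "\<sigma> j \<noteq> j" by auto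
          moreover have "finite S" using S fin finite_subset by auto
          ultimately have "(\<Prod>j\<in>S. if \<sigma> j = j then q j else 0) = 0"
            by (intro prod_zero) auto
          thus ?thesis using False by auto
        qed
      qed
      also have "\<dots> = (\<Sum>\<sigma>\<in>{\<sigma>\<in>?P. \<forall>j\<in>S. \<sigma> j = j}. of_int (sign \<sigma>) *
        ((\<Prod>j\<in>S. q j) * (\<Prod>j\<in>I - S. M j (\<sigma> j))))" by (rule sum.inter_filter[OF finP, symmetric])
      finally show ?thesis .
    qed
    also have "{\<sigma>\<in>?P. \<forall>j\<in>S. \<sigma> j = j} = {\<sigma>. \<sigma> permutes (I - S)}"
      using permutes_fix_eq[of S I] S by auto
    finally show "(\<Sum>\<sigma>\<in>?P. of_int (sign \<sigma>) *
        ((\<Prod>j\<in>S. if \<sigma> j = j then q j else 0) * (\<Prod>j\<in>I - S. M j (\<sigma> j))))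
      = (\<Prod>j\<in>S. q j) * detI (I - S) M"
      unfolding detI_def by (simp add: sum_distrib_left mult.assoc mult.left_commute)
  qed
  finally show ?thesis .
qed


lemma sum_swap_filter:
  assumes "finite A" "finite B"
  shows "(\<Sum>a\<in>A. \<Sum>b\<in>{b\<in>B. R a b}. f a b) = (\<Sum>b\<in>B. \<Sum>a\<in>{a\<in>A. R a b}. f a b)"
proof -
  have "(\<Sum>a\<in>A. \<Sum>b\<in>{b\<in>B. R a b}. f a b) = (\<Sum>a\<in>A. \<Sum>b\<in>B. if R a b then f a b else 0)"
    using assms by (simp add: sum.inter_filter)
  also have "\<dots> = (\<Sum>b\<in>B. \<Sum>a\<in>A. if R a b then f a b else 0)" by (rule sum.swap)
  also have "\<dots> = (\<Sum>b\<in>B. \<Sum>a\<in>{a\<in>A. R a b}. f a b)"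
    using assms by (simp add: sum.inter_filter)
  finally show ?thesis .
qed

definition M0 :: "real \<Rightarrow> real \<Rightarrow> nat \<Rightarrow> (nat \<Rightarrow> real) \<Rightarrow> nat \<Rightarrow> nat \<Rightarrow> complex" where
  "M0 mu g n x j l = (if j = l then zE mu g n x j else Lnr_off mu g x j l)"

lemma sigma_coeff_eq:
  "sigma_coeff mu g n k S x = (\<Sum>I\<in>{I. I \<subseteq> {..<n} \<and> card I = k \<and> S \<subseteq> I}. detI (I - S) (M0 mu g n x))"
proof -
  have "(\<Sum>\<sigma>\<in>{\<sigma>. \<sigma> permutes I \<and> (\<forall>j\<in>S. \<sigma> j = j)}. of_int (sign \<sigma>) *
          (\<Prod>j\<in>I - S. if \<sigma> j = j then zE mu g n x j else Lnr_off mu g x j (\<sigma> j)))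
      = detI (I - S) (M0 mu g n x)" if I: "I \<in> {I. I \<subseteq> {..<n} \<and> card I = k \<and> S \<subseteq> I}" for I
  proof -
    have e: "{\<sigma>. \<sigma> permutes I \<and> (\<forall>j\<in>S. \<sigma> j = j)} = {\<sigma>. \<sigma> permutes (I - S)}"
      using I permutes_fix_eq[of S I] by auto
    show ?thesis
      unfolding e M0_def detI_def by (intro sum.cong refl arg_cong2[where f="(*)"] prod.cong) auto
  qed
  thus ?thesis unfolding sigma_coeff_def by (intro sum.cong refl) auto
qed

lemma sigma_sum:
  "(\<Sum>S\<in>Pow {..<n}. sigma_coeff mu g n k S x * (\<Prod>j\<in>S. p j))
   = Ek n k (\<lambda>j l. M0 mu g n x j l + (if j = l then p j else 0))"
proof -
  let ?I = "{I. I \<subseteq> {..<n} \<and> card I = k}"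
  have finI: "finite ?I" by (rule finite_subset[of _ "Pow {..<n}"]) auto
  have "(\<Sum>S\<in>Pow {..<n}. sigma_coeff mu g n k S x * (\<Prod>j\<in>S. p j))
      = (\<Sum>S\<in>Pow {..<n}. \<Sum>I\<in>{I\<in>?I. S \<subseteq> I}. (\<Prod>j\<in>S. p j) * detI (I - S) (M0 mu g n x))"
    unfolding sigma_coeff_eq by (intro sum.cong refl) (simp add: sum_distrib_right, rule sum.cong, auto simp: mult.commute)
  also have "\<dots> = (\<Sum>I\<in>?I. \<Sum>S\<in>{S\<in>Pow {..<n}. S \<subseteq> I}. (\<Prod>j\<in>S. p j) * detI (I - S) (M0 mu g n x))"
    by (rule sum_swap_filter) (auto simp: finI)
  also have "\<dots> = (\<Sum>I\<in>?I. \<Sum>S\<in>Pow I. (\<Prod>j\<in>S. p j) * detI (I - S) (M0 mu g n x))"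
    by (intro sum.cong refl) auto
  also have "\<dots> = Ek n k (\<lambda>j l. M0 mu g n x j l + (if j = l then p j else 0))"
    unfolding Ek_def
    by (intro sum.cong refl detI_expand[symmetric]) (auto intro: finite_subset)
  finally show ?thesis .
qed

lemma charpoly_expand:
  fixes M :: "nat \<Rightarrow> nat \<Rightarrow> 'a::comm_ring_1"
  shows "detI {..<n} (\<lambda>j l. M j l + (if j = l then t else 0)) = (\<Sum>k\<le>n. t ^ (n - k) * Ek n k M)"
proof -
  have "detI {..<n} (\<lambda>j l. M j l + (if j = l then t else 0))
      = (\<Sum>S\<in>Pow {..<n}. t ^ card S * detI ({..<n} - S) M)"
    by (simp add: detI_expand)
  also have "\<dots> = (\<Sum>I\<in>Pow {..<n}. t ^ (n - card I) * detI I M)"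
  proof (rule sum.reindex_bij_witness[where i="\<lambda>I. {..<n} - I" and j="\<lambda>S. {..<n} - S"])
    fix I assume "I \<in> Pow {..<n}"
    hence "card ({..<n} - I) = n - card I" by (subst card_Diff_subset) (auto intro: finite_subset)
    moreover have "card I \<le> n" using \<open>I \<in> Pow {..<n}\<close> card_mono[of "{..<n}" I] by auto
    ultimately show "t ^ (n - card ({..<n} - I)) * detI ({..<n} - I) M = t ^ card I * detI ({..<n} - I) M"
      by simp
  qed auto
  also have "\<dots> = (\<Sum>k\<le>n. \<Sum>I\<in>{I\<in>Pow {..<n}. card I = k}. t ^ (n - card I) * detI I M)"
  proof (rule sum.group[symmetric])
    show "card ` Pow {..<n} \<subseteq> {..n}"
    proof
      fix c assume "c \<in> card ` Pow {..<n}"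
      then obtain I where "I \<subseteq> {..<n}" "c = card I" by auto
      thus "c \<in> {..n}" using card_mono[of "{..<n}" I] by auto
    qed
  qed auto
  also have "\<dots> = (\<Sum>k\<le>n. t ^ (n - k) * Ek n k M)"
    unfolding Ek_def by (intro sum.cong refl) (auto simp: sum_distrib_left intro!: sum.cong)
  finally show ?thesis .
qed

lemma detI_scale:
  fixes R :: "nat \<Rightarrow> nat \<Rightarrow> real"
  assumes "finite I"
  shows "detI I (\<lambda>j l. c * complex_of_real (R j l)) = c ^ card I * complex_of_real (detI I R)"
  unfolding detI_def
  by (simp add: sum_distrib_left prod.distrib mult_ac)

lemma Ek_scale:
  fixes R :: "nat \<Rightarrow> nat \<Rightarrow> real"
  shows "Ek n k (\<lambda>j l. c * complex_of_real (R j l)) = c ^ k * complex_of_real (Ek n k R)"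
proof -
  have "detI I (\<lambda>j l. c * complex_of_real (R j l)) = c ^ k * complex_of_real (detI I R)"
    if "I \<in> {I. I \<subseteq> {..<n} \<and> card I = k}" for I
    using that detI_scale[where I=I and R=R and c=c] finite_subset[of I "{..<n}"] by auto
  thus ?thesis by (simp add: Ek_def sum_distrib_left)
qed

lemma mult_entry:
  assumes "X \<in> carrier_mat n k" "Y \<in> carrier_mat k l" "i < n" "j < l"
  shows "(X * Y) $$ (i,j) = (\<Sum>q<k. X $$ (i,q) * Y $$ (q,j))"
  using assms by (auto simp: scalar_prod_def atLeast0LessThan intro!: sum.cong)

definition mtr :: "nat \<Rightarrow> 'a::comm_ring_1 mat \<Rightarrow> 'a" where
  "mtr n X = (\<Sum>i<n. X $$ (i,i))"

lemma mtr_comm: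
  assumes "X \<in> carrier_mat n k" "Y \<in> carrier_mat k n"
  shows "mtr n (X * Y) = mtr k (Y * X)"
proof -
  have "mtr n (X * Y) = (\<Sum>i<n. \<Sum>q<k. X $$ (i,q) * Y $$ (q,i))"
    unfolding mtr_def using assms by (intro sum.cong refl mult_entry) auto
  also have "\<dots> = (\<Sum>q<k. \<Sum>i<n. Y $$ (q,i) * X $$ (i,q))"
    by (subst sum.swap) (simp add: mult.commute)
  also have "\<dots> = mtr k (Y * X)"
    unfolding mtr_def using assms by (intro sum.cong refl mult_entry[symmetric]) auto
  finally show ?thesis .
qed

lemma detI_det: "detI {..<n} M = det (mat n n (\<lambda>(i,j). M i j))"
proof -
  have "det (mat n n (\<lambda>(i,j). M i j)) =
     (\<Sum>p\<in>{p. p permutes {0..<n}}. of_int (sign p) * (\<Prod>i = 0..<n. mat n n (\<lambda>(i,j). M i j) $$ (i, p i)))"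
    by (rule det_def') auto
  also have "\<dots> = detI {..<n} M"
    unfolding detI_def atLeast0LessThan
  proof (intro sum.cong refl arg_cong2[where f="(*)"] prod.cong)
    fix p i assume "p \<in> {p. p permutes {..<n}}" "i \<in> {..<n}"
    hence "p i < n" using permutes_in_image by fastforce
    thus "mat n n (\<lambda>(i,j). M i j) $$ (i, p i) = M i (p i)" using \<open>i \<in> {..<n}\<close> by simp
  qed
  finally show ?thesis by simp
qed


lemma partA:
  fixes A B C :: "nat \<Rightarrow> nat \<Rightarrow> real" and m :: nat and t :: real
  assumes inter: "\<And>j n. j < Suc m \<Longrightarrow> n < m \<Longrightarrow> (\<Sum>l<Suc m. A j l * C l n) = (\<Sum>q<m. C j q * B n q)"
    and detC: "det (mat m m (\<lambda>(i,j). C i j)) \<noteq> 0"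
    and tr: "(\<Sum>j<Suc m. A j j) = (\<Sum>n<m. B n n)"
  shows "detI {..<Suc m} (\<lambda>j l. A j l + (if j = l then t else 0))
       = t * detI {..<m} (\<lambda>j l. B j l + (if j = l then t else 0))"
proof -
  define N where "N = Suc m"
  define AA where "AA = mat N N (\<lambda>(i,j). A i j)"
  define F where "F = mat N N (\<lambda>(i,j). if j < m then C i j else if i = m then 1 else (0::real))"
  define d where "d = det F"
  have AA: "AA \<in> carrier_mat N N" and Fc: "F \<in> carrier_mat N N" by (auto simp: AA_def F_def)
  have "F = four_block_mat (mat m m (\<lambda>(i,j). C i j)) (0\<^sub>m m 1) (mat 1 m (\<lambda>(i,j). C m j)) (1\<^sub>m 1)"
    by (rule eq_matI) (auto simp: F_def N_def less_Suc_eq)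
  hence "d = det (mat m m (\<lambda>(i,j). C i j)) * det (1\<^sub>m 1 :: real mat)"
    unfolding d_def by (simp add: det_four_block_mat_upper_right_zero[of _ m _ 1])
  hence d0: "d \<noteq> 0" using detC by simp
  have adj: "adj_mat F \<in> carrier_mat N N" "F * adj_mat F = d \<cdot>\<^sub>m 1\<^sub>m N" "adj_mat F * F = d \<cdot>\<^sub>m 1\<^sub>m N"
    using adj_mat[OF Fc] by (auto simp: d_def)
  define G where "G = (1/d) \<cdot>\<^sub>m (adj_mat F * (AA * F))"
  have Gc: "G \<in> carrier_mat N N" using adj AA Fc by (auto simp: G_def)
  have FG: "F * G = AA * F"
  proof -
    have "F * G = (1/d) \<cdot>\<^sub>m (F * (adj_mat F * (AA * F)))"
      unfolding G_def using adj AA Fc by (subst mult_smult_distrib[of _ N N _ N]) auto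
    also have "F * (adj_mat F * (AA * F)) = (F * adj_mat F) * (AA * F)"
      using adj AA Fc by (subst assoc_mult_mat[of _ N N _ N _ N]) auto
    also have "\<dots> = d \<cdot>\<^sub>m (AA * F)"
      using adj AA Fc by (simp add: mult_smult_assoc_mat[of _ N N _ N])
    finally show ?thesis using d0 AA Fc by (auto intro!: eq_matI)
  qed
  define H where "H = mat N N (\<lambda>(i,j). if j < m then (if i < m then B j i else 0) else G $$ (i, m))"
  have Hc: "H \<in> carrier_mat N N" by (auto simp: H_def)
  have FH: "F * H = AA * F"
  proof (rule eq_matI)
    fix i j assume ij: "i < dim_row (AA * F)" "j < dim_col (AA * F)"
    hence i: "i < N" and j: "j < N" using AA Fc by auto
    show "(F * H) $$ (i,j) = (AA * F) $$ (i,j)"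
    proof (cases "j < m")
      case True
      have "(F * H) $$ (i,j) = (\<Sum>q<N. F $$ (i,q) * H $$ (q,j))"
        using Fc Hc i j by (rule mult_entry)
      also have "\<dots> = (\<Sum>q<m. C i q * B j q)"
        unfolding N_def using True i j by (simp add: F_def H_def N_def)
      also have "\<dots> = (\<Sum>l<Suc m. A i l * C l j)" using inter[of i j] i True by (simp add: N_def)
      also have "\<dots> = (\<Sum>q<N. AA $$ (i,q) * F $$ (q,j))"
        using True i j unfolding N_def by (intro sum.cong refl) (auto simp: AA_def F_def N_def)
      also have "\<dots> = (AA * F) $$ (i,j)"
        using AA Fc i j by (rule mult_entry[symmetric])
      finally show ?thesis .
    next
      case False
      hence jm: "j = m" using j by (simp add: N_def)
      have "(F * H) $$ (i,j) = (\<Sum>q<N. F $$ (i,q) * H $$ (q,j))"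
        using Fc Hc i j by (rule mult_entry)
      also have "\<dots> = (\<Sum>q<N. F $$ (i,q) * G $$ (q,j))"
        using jm by (intro sum.cong refl) (auto simp: H_def N_def)
      also have "\<dots> = (F * G) $$ (i,j)"
        using Fc Gc i j by (rule mult_entry[symmetric])
      finally show ?thesis using FG by simp
    qed
  qed (use AA Fc Hc in auto)
  have trH: "mtr N H = mtr N AA"
  proof -
    have "d * mtr N H = mtr N ((adj_mat F * F) * H)"
      using adj Hc by (simp add: mult_smult_assoc_mat[of _ N N _ N] mtr_def sum_distrib_left)
    also have "(adj_mat F * F) * H = adj_mat F * (AA * F)"
      using adj Hc Fc FH by (subst assoc_mult_mat[of _ N N _ N _ N]) auto
    also have "mtr N \<dots> = mtr N ((AA * F) * adj_mat F)"
      using adj AA Fc by (intro mtr_comm) auto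
    also have "(AA * F) * adj_mat F = AA * (F * adj_mat F)"
      using adj AA Fc by (subst assoc_mult_mat[of _ N N _ N _ N]) auto
    also have "mtr N \<dots> = d * mtr N AA"
      using adj AA by (simp add: mult_smult_distrib[of _ N N _ N] mtr_def sum_distrib_left)
    finally show ?thesis using d0 by simp
  qed
  have c0: "G $$ (m, m) = 0"
  proof -
    have "mtr N H = (\<Sum>i<m. B i i) + G $$ (m,m)" by (simp add: mtr_def H_def N_def)
    moreover have "mtr N AA = (\<Sum>j<Suc m. A j j)" by (simp add: mtr_def AA_def N_def)
    ultimately show ?thesis using trH tr by simp
  qed
  define P where "P = mat N N (\<lambda>(i,j). A i j + (if i = j then t else 0))"
  define Q where "Q = mat N N (\<lambda>(i,j). H $$ (i,j) + (if i = j then t else 0))"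
  have Pc: "P \<in> carrier_mat N N" and Qc: "Q \<in> carrier_mat N N" by (auto simp: P_def Q_def)
  have PF: "P * F = F * Q"
  proof (rule eq_matI)
    fix i j assume "i < dim_row (F * Q)" "j < dim_col (F * Q)"
    hence i: "i < N" and j: "j < N" using Fc Qc by auto
    have "(P * F) $$ (i,j) = (\<Sum>q<N. P $$ (i,q) * F $$ (q,j))" using Pc Fc i j by (rule mult_entry)
    also have "\<dots> = (\<Sum>q<N. AA $$ (i,q) * F $$ (q,j)) + (\<Sum>q<N. (if i = q then t else 0) * F $$ (q,j))"
      using i by (simp add: P_def AA_def sum.distrib[symmetric] distrib_right)
    also have "(\<Sum>q<N. (if i = q then t else 0) * F $$ (q,j)) = t * F $$ (i,j)"
    proof -
      have "(\<Sum>q<N. (if i = q then t else 0) * F $$ (q,j)) = (\<Sum>q<N. if i = q then t * F $$ (q,j) else 0)"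
        by (intro sum.cong) auto
      also have "\<dots> = t * F $$ (i,j)" using i by (simp add: sum.delta)
      finally show ?thesis .
    qed
    also have "(\<Sum>q<N. AA $$ (i,q) * F $$ (q,j)) = (F * H) $$ (i,j)"
      using FH mult_entry[OF AA Fc i j] by simp
    also have "(F * H) $$ (i,j) = (\<Sum>q<N. F $$ (i,q) * H $$ (q,j))" using Fc Hc i j by (rule mult_entry)
    also have "(\<Sum>q<N. F $$ (i,q) * H $$ (q,j)) + t * F $$ (i,j) = (\<Sum>q<N. F $$ (i,q) * Q $$ (q,j))"
    proof -
      have "(\<Sum>q<N. F $$ (i,q) * Q $$ (q,j)) = (\<Sum>q<N. F $$ (i,q) * H $$ (q,j) + (if q = j then t * F $$ (i,q) else 0))"
        using j by (intro sum.cong refl) (auto simp: Q_def distrib_left)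
      also have "\<dots> = (\<Sum>q<N. F $$ (i,q) * H $$ (q,j)) + t * F $$ (i,j)"
        using j by (simp add: sum.distrib sum.delta')
      finally show ?thesis by simp
    qed
    also have "\<dots> = (F * Q) $$ (i,j)" using Fc Qc i j by (rule mult_entry[symmetric])
    finally show "(P * F) $$ (i,j) = (F * Q) $$ (i,j)" .
  qed (use Pc Fc Qc in auto)
  have "det P * d = d * det Q"
    using arg_cong[OF PF, of det] det_mult[OF Pc Fc] det_mult[OF Fc Qc] by (simp add: d_def)
  hence dPQ: "det P = det Q" using d0 by simp
  define Bt where "Bt = mat m m (\<lambda>(i,j). B j i + (if i = j then t else 0))"
  have "Q = four_block_mat Bt (mat m 1 (\<lambda>(i,j). G $$ (i,m))) (0\<^sub>m 1 m) (mat 1 1 (\<lambda>_. t))"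
    by (rule eq_matI) (auto simp: Q_def H_def Bt_def N_def c0 less_Suc_eq)
  hence "det Q = det Bt * det (mat 1 1 (\<lambda>_. t))"
    by (simp add: det_four_block_mat_lower_left_zero[of _ m _ 1] Bt_def)
  also have "det (mat 1 1 (\<lambda>_. t)) = t"
    by (simp add: det_def' [of _ 1] )
  also have "det Bt = det (mat m m (\<lambda>(i,j). B i j + (if i = j then t else 0)))"
  proof -
    have "Bt = transpose_mat (mat m m (\<lambda>(i,j). B i j + (if i = j then t else 0)))"
      by (rule eq_matI) (auto simp: Bt_def)
    thus ?thesis by (simp add: det_transpose[of _ m])
  qed
  finally have "det Q = det (mat m m (\<lambda>(i,j). B i j + (if i = j then t else 0))) * t" .
  thus ?thesis using dPQ unfolding detI_det P_def N_def by (simp add: mult.commute)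
qed


lemma rev_powsum:
  fixes t :: "'a::comm_ring_1"
  shows "(\<Sum>k\<le>n. t ^ (n - k) * a k) = (\<Sum>i\<le>n. a (n - i) * t ^ i)"
  by (rule sum.reindex_bij_witness[where i="\<lambda>k. n - k" and j="\<lambda>k. n - k"]) auto

lemma partA_Ek:
  fixes A B C :: "nat \<Rightarrow> nat \<Rightarrow> real" and m :: nat
  assumes inter: "\<And>j n. j < Suc m \<Longrightarrow> n < m \<Longrightarrow> (\<Sum>l<Suc m. A j l * C l n) = (\<Sum>q<m. C j q * B n q)"
    and detC: "det (mat m m (\<lambda>(i,j). C i j)) \<noteq> 0"
    and tr: "(\<Sum>j<Suc m. A j j) = (\<Sum>n<m. B n n)"
  shows "Ek (Suc m) (Suc m) A = 0" and "\<And>k. 1 \<le> k \<Longrightarrow> k \<le> m \<Longrightarrow> Ek (Suc m) k A = Ek m k B"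
proof -
  define c where "c i = Ek (Suc m) (Suc m - i) A" for i
  define d where "d i = (if i = 0 then 0 else Ek m (Suc m - i) B)" for i
  have "\<forall>t::real. (\<Sum>i\<le>Suc m. c i * t ^ i) = (\<Sum>i\<le>Suc m. d i * t ^ i)"
  proof
    fix t :: real
    have "(\<Sum>i\<le>Suc m. c i * t ^ i) = detI {..<Suc m} (\<lambda>j l. A j l + (if j = l then t else 0))"
      unfolding charpoly_expand rev_powsum c_def ..
    also have "\<dots> = t * detI {..<m} (\<lambda>j l. B j l + (if j = l then t else 0))"
      by (rule partA[OF inter detC tr])
    also have "\<dots> = t * (\<Sum>i\<le>m. Ek m (m - i) B * t ^ i)"
      unfolding charpoly_expand rev_powsum ..
    also have "\<dots> = (\<Sum>i\<le>m. d (Suc i) * t ^ Suc i)"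
      by (simp add: sum_distrib_left d_def mult_ac)
    also have "\<dots> = (\<Sum>i\<le>Suc m. d i * t ^ i)"
      by (subst sum.atMost_Suc_shift) (simp add: d_def)
    finally show "(\<Sum>i\<le>Suc m. c i * t ^ i) = (\<Sum>i\<le>Suc m. d i * t ^ i)" .
  qed
  hence cd: "\<And>i. i \<le> Suc m \<Longrightarrow> c i = d i" using polyfun_eq_coeffs[of c "Suc m" d] by blast
  show "Ek (Suc m) (Suc m) A = 0" using cd[of 0] by (simp add: c_def d_def)
  fix k assume k: "1 \<le> k" "k \<le> m"
  show "Ek (Suc m) k A = Ek m k B" using cd[of "Suc m - k"] k by (simp add: c_def d_def Suc_diff_le)
qed

lemma hyp1:
  fixes u v :: real assumes "u \<noteq> 0"
  shows "1 / sinh u * (1 / cosh v) = (coth u + tanh v) / cosh (u + v)"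
proof -
  have s: "sinh u \<noteq> 0" using assms by simp
  have c: "cosh v \<noteq> 0" "cosh (u+v) \<noteq> 0" using cosh_real_pos[of v] cosh_real_pos[of "u+v"] by auto
  have "coth u + tanh v = cosh (u+v) / (sinh u * cosh v)"
    unfolding coth_def tanh_def cosh_add using s c by (simp add: divide_simps)
  thus ?thesis using c by simp
qed
lemma hyp2:
  fixes U V :: real assumes "U \<noteq> 0"
  shows "1 / cosh (U + V) * (- (1 / sinh U)) = - ((coth U - tanh (U + V)) / cosh V)"
proof -
  have s: "sinh U \<noteq> 0" using assms by simp
  have c: "cosh V \<noteq> 0" "cosh (U+V) \<noteq> 0" using cosh_real_pos[of V] cosh_real_pos[of "U+V"] by auto
  have e: "cosh V = cosh (U+V) * cosh U - sinh (U+V) * sinh U"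
    using cosh_add[of "U+V" "-U"] by simp
  have "coth U - tanh (U+V) = cosh V / (sinh U * cosh (U+V))"
    unfolding coth_def tanh_def e using s c by (simp add: divide_simps)
  thus ?thesis using c by simp
qed
definition Rx :: "nat \<Rightarrow> real \<Rightarrow> (nat \<Rightarrow> real) \<Rightarrow> (nat \<Rightarrow> real) \<Rightarrow> nat \<Rightarrow> nat \<Rightarrow> real" where
  "Rx N mu x y j l = (if j = l then (\<Sum>q<N - 1. tanh (mu * (x j - y q) / 2))
       - (\<Sum>l'\<in>{..<N} - {j}. coth (mu * (x j - x l') / 2)) else 1 / sinh (mu * (x j - x l) / 2))"

definition Ry :: "nat \<Rightarrow> real \<Rightarrow> (nat \<Rightarrow> real) \<Rightarrow> (nat \<Rightarrow> real) \<Rightarrow> nat \<Rightarrow> nat \<Rightarrow> real" where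
  "Ry N mu x y n l = (if n = l then (\<Sum>i<N. tanh (mu * (x i - y n) / 2))
       + (\<Sum>l'\<in>{..<N - 1} - {n}. coth (mu * (y n - y l') / 2)) else - (1 / sinh (mu * (y n - y l) / 2)))"

definition Cc :: "real \<Rightarrow> (nat \<Rightarrow> real) \<Rightarrow> (nat \<Rightarrow> real) \<Rightarrow> nat \<Rightarrow> nat \<Rightarrow> real" where
  "Cc mu x y j n = 1 / cosh (mu * (x j - y n) / 2)"

lemma intertwine:
  fixes mu :: real and x y :: "nat \<Rightarrow> real" and m :: nat
  assumes mu: "mu > 0" and ix: "inj_on x {..<Suc m}" and iy: "inj_on y {..<m}"
    and j: "j < Suc m" and n: "n < m"
  shows "(\<Sum>l<Suc m. Rx (Suc m) mu x y j l * Cc mu x y l n) = (\<Sum>q<m. Cc mu x y j q * Ry (Suc m) mu x y n q)"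
proof -
  define w where "w = mu * (x j - y n) / 2"
  define T1 where "T1 = (\<Sum>l\<in>{..<Suc m} - {j}. tanh (mu * (x l - y n) / 2))"
  define T2 where "T2 = (\<Sum>q\<in>{..<m} - {n}. tanh (mu * (x j - y q) / 2))"
  have cw: "cosh w \<noteq> 0" using cosh_real_pos[of w] by linarith
  have "(\<Sum>l<Suc m. Rx (Suc m) mu x y j l * Cc mu x y l n)
      = Rx (Suc m) mu x y j j * Cc mu x y j n + (\<Sum>l\<in>{..<Suc m} - {j}. Rx (Suc m) mu x y j l * Cc mu x y l n)"
    using j by (subst sum.remove[of _ j]) auto
  also have "(\<Sum>l\<in>{..<Suc m} - {j}. Rx (Suc m) mu x y j l * Cc mu x y l n)
      = (\<Sum>l\<in>{..<Suc m} - {j}. (coth (mu * (x j - x l) / 2) + tanh (mu * (x l - y n) / 2)) / cosh w)"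
  proof (intro sum.cong refl)
    fix l assume l: "l \<in> {..<Suc m} - {j}"
    hence "x j \<noteq> x l" using ix j by (auto dest: inj_onD)
    hence ne: "mu * (x j - x l) / 2 \<noteq> 0" using mu by simp
    have "mu * (x j - x l) / 2 + mu * (x l - y n) / 2 = w" by (simp add: w_def field_simps)
    thus "Rx (Suc m) mu x y j l * Cc mu x y l n = (coth (mu * (x j - x l) / 2) + tanh (mu * (x l - y n) / 2)) / cosh w"
      using l hyp1[OF ne, of "mu * (x l - y n) / 2"] by (simp add: Rx_def Cc_def)
  qed
  also have "\<dots> = ((\<Sum>l\<in>{..<Suc m} - {j}. coth (mu * (x j - x l) / 2)) + T1) / cosh w"
    by (simp add: T1_def sum_divide_distrib[symmetric] sum.distrib)
  also have "Rx (Suc m) mu x y j j = (\<Sum>q<m. tanh (mu * (x j - y q) / 2)) - (\<Sum>l\<in>{..<Suc m} - {j}. coth (mu * (x j - x l) / 2))"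
    by (simp add: Rx_def)
  also have "(\<Sum>q<m. tanh (mu * (x j - y q) / 2)) = tanh w + T2"
    using n by (subst sum.remove[of _ n]) (auto simp: w_def T2_def)
  finally have L: "(\<Sum>l<Suc m. Rx (Suc m) mu x y j l * Cc mu x y l n) = (tanh w + T2 + T1) / cosh w"
    unfolding Cc_def w_def[symmetric] using cw by (simp add: divide_simps)
  have "(\<Sum>q<m. Cc mu x y j q * Ry (Suc m) mu x y n q)
      = Cc mu x y j n * Ry (Suc m) mu x y n n + (\<Sum>q\<in>{..<m} - {n}. Cc mu x y j q * Ry (Suc m) mu x y n q)"
    using n by (subst sum.remove[of _ n]) auto
  also have "(\<Sum>q\<in>{..<m} - {n}. Cc mu x y j q * Ry (Suc m) mu x y n q)
      = (\<Sum>q\<in>{..<m} - {n}. - ((coth (mu * (y n - y q) / 2) - tanh (mu * (x j - y q) / 2)) / cosh w))"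
  proof (intro sum.cong refl)
    fix q assume q: "q \<in> {..<m} - {n}"
    hence "y n \<noteq> y q" using iy n by (auto dest: inj_onD)
    hence ne: "mu * (y n - y q) / 2 \<noteq> 0" using mu by simp
    have e: "mu * (y n - y q) / 2 + w = mu * (x j - y q) / 2" by (simp add: w_def field_simps)
    show "Cc mu x y j q * Ry (Suc m) mu x y n q = - ((coth (mu * (y n - y q) / 2) - tanh (mu * (x j - y q) / 2)) / cosh w)"
      using q hyp2[OF ne, of w] unfolding e by (simp add: Ry_def Cc_def)
  qed
  also have "\<dots> = (T2 - (\<Sum>q\<in>{..<m} - {n}. coth (mu * (y n - y q) / 2))) / cosh w"
  proof -
    have "(\<Sum>q\<in>{..<m} - {n}. - ((coth (mu * (y n - y q) / 2) - tanh (mu * (x j - y q) / 2)) / cosh w))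
       = (\<Sum>q\<in>{..<m} - {n}. (tanh (mu * (x j - y q) / 2) - coth (mu * (y n - y q) / 2)) / cosh w)"
      by (intro sum.cong refl) (simp add: minus_divide_left)
    also have "\<dots> = (T2 - (\<Sum>q\<in>{..<m} - {n}. coth (mu * (y n - y q) / 2))) / cosh w"
      by (simp add: T2_def sum_divide_distrib[symmetric] sum_subtractf)
    finally show ?thesis .
  qed
  also have "Ry (Suc m) mu x y n n = (\<Sum>i<Suc m. tanh (mu * (x i - y n) / 2)) + (\<Sum>q\<in>{..<m} - {n}. coth (mu * (y n - y q) / 2))"
    by (simp add: Ry_def)
  also have "(\<Sum>i<Suc m. tanh (mu * (x i - y n) / 2)) = tanh w + T1"
    using j by (subst sum.remove[of _ j]) (auto simp: w_def T1_def)
  finally have R: "(\<Sum>q<m. Cc mu x y j q * Ry (Suc m) mu x y n q) = (tanh w + T2 + T1) / cosh w"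
    unfolding Cc_def w_def[symmetric] using cw by (simp add: divide_simps)
  show ?thesis using L R by simp
qed


lemma antisym_sum:
  fixes f :: "nat \<Rightarrow> nat \<Rightarrow> real"
  assumes fin: "finite A" and as: "\<And>i j. f i j = - f j i"
  shows "(\<Sum>i\<in>A. \<Sum>j\<in>A - {i}. f i j) = 0"
proof -
  define S0 where "S0 = (\<Sum>i\<in>A. \<Sum>j\<in>A. if j \<noteq> i then f i j else 0)"
  have 1: "(\<Sum>i\<in>A. \<Sum>j\<in>A - {i}. f i j) = S0"
    unfolding S0_def
  proof (rule sum.cong[OF refl])
    fix i assume "i \<in> A"
    have "(\<Sum>j\<in>A. if j \<noteq> i then f i j else 0) = (\<Sum>j\<in>{j\<in>A. j \<noteq> i}. f i j)"
      using fin by (rule sum.inter_filter[symmetric])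
    also have "{j\<in>A. j \<noteq> i} = A - {i}" by auto
    finally show "(\<Sum>j\<in>A - {i}. f i j) = (\<Sum>j\<in>A. if j \<noteq> i then f i j else 0)" by simp
  qed
  have "S0 = (\<Sum>j\<in>A. \<Sum>i\<in>A. if j \<noteq> i then f i j else 0)" unfolding S0_def by (rule sum.swap)
  also have "\<dots> = (\<Sum>j\<in>A. \<Sum>i\<in>A. - (if i \<noteq> j then f j i else 0))"
    by (intro sum.cong refl) (metis as minus_zero)
  also have "\<dots> = - S0" unfolding S0_def by (simp add: sum_negf)
  finally have "S0 = 0" by simp
  thus ?thesis using 1 by simp
qed

lemma coth_minus: "coth (- t) = - coth t" by (simp add: coth_def)

lemma coth_anti: "coth (mu * (a - b) / 2) = - coth (mu * (b - a) / 2)"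
proof -
  have "mu * (a - b) / 2 = - (mu * (b - a) / 2)" by (simp add: field_simps)
  thus ?thesis by (simp add: coth_minus)
qed

lemma trace_eq:
  "(\<Sum>j<Suc m. Rx (Suc m) mu x y j j) = (\<Sum>n<m. Ry (Suc m) mu x y n n)"
proof -
  have a1: "(\<Sum>j<Suc m. \<Sum>l\<in>{..<Suc m} - {j}. coth (mu * (x j - x l) / 2)) = 0"
    by (rule antisym_sum) (auto intro: coth_anti)
  have a2: "(\<Sum>n<m. \<Sum>l\<in>{..<m} - {n}. coth (mu * (y n - y l) / 2)) = 0"
    by (rule antisym_sum) (auto intro: coth_anti)
  have "(\<Sum>j<Suc m. Rx (Suc m) mu x y j j) = (\<Sum>j<Suc m. \<Sum>q<m. tanh (mu * (x j - y q) / 2))"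
    using a1 by (simp add: Rx_def sum_subtractf)
  also have "\<dots> = (\<Sum>q<m. \<Sum>j<Suc m. tanh (mu * (x j - y q) / 2))" by (rule sum.swap)
  also have "\<dots> = (\<Sum>n<m. Ry (Suc m) mu x y n n)"
    using a2 by (simp add: Ry_def sum.distrib)
  finally show ?thesis .
qed

lemma Cc_exp:
  "Cc mu x y i n = 2 * exp (mu * x i / 2) * exp (mu * y n / 2) / (exp (mu * x i) + exp (mu * y n))"
proof -
  define a where "a = mu * x i / 2"
  define b where "b = mu * y n / 2"
  have e1: "exp (mu * x i) = exp a * exp a" by (simp add: a_def exp_add[symmetric])
  have e2: "exp (mu * y n) = exp b * exp b" by (simp add: b_def exp_add[symmetric])
  have "cosh (mu * (x i - y n) / 2) = cosh (a - b)" by (simp add: a_def b_def field_simps)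
  also have "\<dots> = (exp a * exp a + exp b * exp b) / (2 * exp a * exp b)"
    unfolding cosh_field_def exp_diff exp_minus by (simp add: field_simps exp_diff)
  finally show ?thesis unfolding Cc_def e1 e2 a_def[symmetric] b_def[symmetric] by simp
qed

lemma cauchy_det:
  fixes mu :: real and x y :: "nat \<Rightarrow> real"
  assumes mu: "mu > 0" and ix: "inj_on x {..<m}" and iy: "inj_on y {..<m}"
  shows "det (mat m m (\<lambda>(i,j). Cc mu x y i j)) \<noteq> 0"
proof
  assume "det (mat m m (\<lambda>(i,j). Cc mu x y i j)) = 0"
  then obtain v where v: "v \<in> carrier_vec m" "v \<noteq> 0\<^sub>v m" "mat m m (\<lambda>(i,j). Cc mu x y i j) *\<^sub>v v = 0\<^sub>v m"
    using det_0_iff_vec_prod_zero[of "mat m m (\<lambda>(i,j). Cc mu x y i j)" m] by auto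
  define X where "X i = exp (mu * x i)" for i
  define Y where "Y n = exp (mu * y n)" for n
  define w where "w n = v $ n * exp (mu * y n / 2)" for n
  have Xp: "X i > 0" for i by (simp add: X_def)
  have Yp: "Y i > 0" for i by (simp add: Y_def)
  have eqs: "(\<Sum>n<m. w n / (X i + Y n)) = 0" if i: "i < m" for i
  proof -
    have "(mat m m (\<lambda>(i,j). Cc mu x y i j) *\<^sub>v v) $ i = 0" using v(3) i by simp
    hence "(\<Sum>n<m. Cc mu x y i n * v $ n) = 0"
      using i v(1) by (simp add: scalar_prod_def atLeast0LessThan)
    hence "(\<Sum>n<m. (2 * exp (mu * x i / 2)) * (w n / (X i + Y n))) = 0"
      unfolding Cc_exp w_def X_def Y_def by (simp add: field_simps)
    hence "(2 * exp (mu * x i / 2)) * (\<Sum>n<m. w n / (X i + Y n)) = 0"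
      by (simp add: sum_distrib_left)
    thus ?thesis by simp
  qed
  define P where "P = (\<Sum>n<m. Polynomial.smult (w n) (\<Prod>q\<in>{..<m} - {n}. [:Y q, 1:]))"
  have polyP: "poly P z = (\<Sum>n<m. w n * (\<Prod>q\<in>{..<m} - {n}. Y q + z))" for z
    by (simp add: P_def poly_sum poly_prod)
  have degP: "degree P \<le> m - 1"
    unfolding P_def
  proof (rule degree_sum_le)
    fix n assume n: "n \<in> {..<m}"
    have "degree (\<Prod>q\<in>{..<m} - {n}. [:Y q, 1:]) \<le> (\<Sum>q\<in>{..<m} - {n}. degree [:Y q, 1:])"
      using degree_prod_sum_le[of "{..<m} - {n}" "\<lambda>q. [:Y q, 1:]"] by (simp add: o_def)
    also have "\<dots> = m - 1" using n by simp
    finally show "degree (Polynomial.smult (w n) (\<Prod>q\<in>{..<m} - {n}. [:Y q, 1:])) \<le> m - 1"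
      using degree_smult_le order.trans by blast
  qed simp
  have roots: "poly P (X i) = 0" if i: "i < m" for i
  proof -
    have "poly P (X i) = (\<Sum>n<m. w n * (\<Prod>q\<in>{..<m} - {n}. Y q + X i))" by (rule polyP)
    also have "\<dots> = (\<Sum>n<m. (\<Prod>q<m. X i + Y q) * (w n / (X i + Y n)))"
    proof (intro sum.cong refl)
      fix n assume n: "n \<in> {..<m}"
      have "(\<Prod>q<m. X i + Y q) = (X i + Y n) * (\<Prod>q\<in>{..<m} - {n}. X i + Y q)"
        using n by (subst prod.remove[of _ n]) auto
      moreover have "X i + Y n \<noteq> 0" using Xp[of i] Yp[of n] by simp
      ultimately show "w n * (\<Prod>q\<in>{..<m} - {n}. Y q + X i) = (\<Prod>q<m. X i + Y q) * (w n / (X i + Y n))"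
        by (simp add: add.commute)
    qed
    also have "\<dots> = (\<Prod>q<m. X i + Y q) * (\<Sum>n<m. w n / (X i + Y n))" by (simp add: sum_distrib_left)
    also have "\<dots> = 0" using eqs[OF i] by simp
    finally show ?thesis .
  qed
  have m0: "m > 0" using v(1,2) by (cases m) auto
  have P0: "P = 0"
  proof (rule ccontr)
    assume "P \<noteq> 0"
    hence fin: "finite {z. poly P z = 0}" and cb: "card {z. poly P z = 0} \<le> degree P"
      using poly_roots_finite card_poly_roots_bound by auto
    have "X ` {..<m} \<subseteq> {z. poly P z = 0}" using roots by auto
    hence "card (X ` {..<m}) \<le> card {z. poly P z = 0}" using fin card_mono by blast
    moreover have "inj_on X {..<m}"
      using ix mu unfolding X_def inj_on_def by auto
    hence "card (X ` {..<m}) = m" by (simp add: card_image)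
    ultimately show False using cb degP m0 by linarith
  qed
  have "w n = 0" if n: "n < m" for n
  proof -
    have "0 = poly P (- Y n)" using P0 by simp
    also have "\<dots> = (\<Sum>n'<m. w n' * (\<Prod>q\<in>{..<m} - {n'}. Y q + - Y n))" by (rule polyP)
    also have "\<dots> = w n * (\<Prod>q\<in>{..<m} - {n}. Y q + - Y n)"
    proof -
      have "(\<Sum>n'<m. w n' * (\<Prod>q\<in>{..<m} - {n'}. Y q + - Y n))
          = w n * (\<Prod>q\<in>{..<m} - {n}. Y q + - Y n) + (\<Sum>n'\<in>{..<m} - {n}. w n' * (\<Prod>q\<in>{..<m} - {n'}. Y q + - Y n))"
        using n by (subst sum.remove[of _ n]) auto
      also have "(\<Sum>n'\<in>{..<m} - {n}. w n' * (\<Prod>q\<in>{..<m} - {n'}. Y q + - Y n)) = 0"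
      proof (rule sum.neutral, rule ballI)
        fix n' assume "n' \<in> {..<m} - {n}"
        hence "(\<Prod>q\<in>{..<m} - {n'}. Y q + - Y n) = 0" using n by (intro prod_zero[of _ _]) (auto intro!: bexI[of _ n])
        thus "w n' * (\<Prod>q\<in>{..<m} - {n'}. Y q + - Y n) = 0" by simp
      qed
      finally show ?thesis by simp
    qed
    finally have z: "w n * (\<Prod>q\<in>{..<m} - {n}. Y q + - Y n) = 0" by simp
    have "(\<Prod>q\<in>{..<m} - {n}. Y q + - Y n) \<noteq> 0"
    proof -
      have "Y q + - Y n \<noteq> 0" if q: "q \<in> {..<m} - {n}" for q
      proof -
        have "y q \<noteq> y n" using q iy n by (auto dest: inj_onD)
        hence "Y q \<noteq> Y n" using mu by (simp add: Y_def)
        thus ?thesis by simp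
      qed
      thus ?thesis by (simp add: prod_zero_iff)
    qed
    thus ?thesis using z by simp
  qed
  hence "v $ n = 0" if "n < m" for n using that by (simp add: w_def)
  hence "v = 0\<^sub>v m" using v(1) by (intro eq_vecI) auto
  thus False using v(2) by simp
qed

lemma dlog:
  fixes mu c :: real
  shows "((\<lambda>u. ln (2 * cosh (mu * (u - c) / 2))) has_real_derivative (mu / 2) * tanh (mu * (u - c) / 2)) (at u)"
proof -
  have cp: "2 * cosh (mu * (u - c) / 2) > 0" using cosh_real_pos by simp
  have "((\<lambda>u. ln (2 * cosh (mu * (u - c) / 2))) has_real_derivative
        (1 / (2 * cosh (mu * (u - c) / 2))) * (2 * (sinh (mu * (u - c) / 2) * (mu * (1 - 0) / 2)))) (at u)"
    using cp by (auto intro!: derivative_eq_intros)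
  thus ?thesis using cp by (simp add: tanh_def field_simps)
qed
lemma dlog2:
  fixes mu c :: real
  shows "((\<lambda>v. ln (2 * cosh (mu * (c - v) / 2))) has_real_derivative - (mu / 2) * tanh (mu * (c - v) / 2)) (at v)"
proof -
  have cp: "2 * cosh (mu * (c - v) / 2) > 0" using cosh_real_pos by simp
  have "((\<lambda>v. ln (2 * cosh (mu * (c - v) / 2))) has_real_derivative
        (1 / (2 * cosh (mu * (c - v) / 2))) * (2 * (sinh (mu * (c - v) / 2) * (mu * (0 - 1) / 2)))) (at v)"
    using cp by (auto intro!: derivative_eq_intros)
  thus ?thesis using cp by (simp add: tanh_def field_simps)
qed

lemma pdiff_foldr_exp:
  fixes \<psi> \<psi>' :: "nat \<Rightarrow> real \<Rightarrow> real" and Ms :: "nat set"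
  assumes fin: "finite Ms" and der: "\<And>j u. (\<psi> j has_real_derivative \<psi>' j u) (at u)"
  shows "distinct l \<Longrightarrow> set l \<subseteq> Ms \<Longrightarrow> foldr pdiff l (\<lambda>x. complex_of_real (exp (\<Sum>m\<in>Ms. \<psi> m (x m))))
     = (\<lambda>x. complex_of_real (exp (\<Sum>m\<in>Ms. \<psi> m (x m))) * (\<Prod>j\<in>set l. complex_of_real (\<psi>' j (x j))))"
proof (induction l)
  case Nil
  show ?case by simp
next
  case (Cons s ss)
  hence IH: "foldr pdiff ss (\<lambda>x. complex_of_real (exp (\<Sum>m\<in>Ms. \<psi> m (x m))))
     = (\<lambda>x. complex_of_real (exp (\<Sum>m\<in>Ms. \<psi> m (x m))) * (\<Prod>j\<in>set ss. complex_of_real (\<psi>' j (x j))))"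
    by auto
  have s: "s \<in> Ms" "s \<notin> set ss" using Cons.prems by auto
  show ?case
  proof
    fix x :: "nat \<Rightarrow> real"
    define R where "R = (\<Sum>m\<in>Ms - {s}. \<psi> m (x m))"
    define P where "P = (\<Prod>j\<in>set ss. complex_of_real (\<psi>' j (x j)))"
    have sumeq: "(\<Sum>m\<in>Ms. \<psi> m ((x(s := t)) m)) = \<psi> s t + R" for t
    proof -
      have "(\<Sum>m\<in>Ms. \<psi> m ((x(s := t)) m)) = \<psi> s t + (\<Sum>m\<in>Ms - {s}. \<psi> m ((x(s := t)) m))"
        using s fin by (subst sum.remove[of _ s]) auto
      also have "(\<Sum>m\<in>Ms - {s}. \<psi> m ((x(s := t)) m)) = R" unfolding R_def by (intro sum.cong) auto
      finally show ?thesis .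
    qed
    have prodeq: "(\<Prod>j\<in>set ss. complex_of_real (\<psi>' j ((x(s := t)) j))) = P" for t
      unfolding P_def using s by (intro prod.cong) auto
    have fx: "(\<lambda>t. complex_of_real (exp (\<Sum>m\<in>Ms. \<psi> m ((x(s := t)) m))) *
          (\<Prod>j\<in>set ss. complex_of_real (\<psi>' j ((x(s := t)) j))))
        = (\<lambda>t. complex_of_real (exp (\<psi> s t + R)) * P)"
      by (rule ext) (simp only: sumeq prodeq)
    have d1: "((\<lambda>t. exp (\<psi> s t + R)) has_real_derivative exp (\<psi> s (x s) + R) * \<psi>' s (x s)) (at (x s))"
      using der[of s "x s"] by (auto intro!: derivative_eq_intros)
    have d2: "((\<lambda>t. complex_of_real (exp (\<psi> s t + R)) * P) has_vector_derivative
        complex_of_real (exp (\<psi> s (x s) + R) * \<psi>' s (x s)) * P) (at (x s))"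
      by (intro has_vector_derivative_mult_left has_vector_derivative_of_real d1)
    have "foldr pdiff (s # ss) (\<lambda>x. complex_of_real (exp (\<Sum>m\<in>Ms. \<psi> m (x m)))) x
        = complex_of_real (exp (\<psi> s (x s) + R) * \<psi>' s (x s)) * P"
      unfolding foldr.simps o_def IH pdiff_def fx by (rule vector_derivative_at[OF d2])
    also have "exp (\<psi> s (x s) + R) = exp (\<Sum>m\<in>Ms. \<psi> m (x m))"
      using sumeq[of "x s"] by simp
    also have "complex_of_real (exp (\<Sum>m\<in>Ms. \<psi> m (x m)) * \<psi>' s (x s)) * P
       = complex_of_real (exp (\<Sum>m\<in>Ms. \<psi> m (x m))) * (\<Prod>j\<in>set (s # ss). complex_of_real (\<psi>' j (x j)))"
      using s by (simp add: P_def)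
    finally show "foldr pdiff (s # ss) (\<lambda>x. complex_of_real (exp (\<Sum>m\<in>Ms. \<psi> m (x m)))) x
       = complex_of_real (exp (\<Sum>m\<in>Ms. \<psi> m (x m))) * (\<Prod>j\<in>set (s # ss). complex_of_real (\<psi>' j (x j)))" .
  qed
qed

lemma pdiffs_exp:
  fixes \<psi> \<psi>' :: "nat \<Rightarrow> real \<Rightarrow> real" and Ms :: "nat set"
  assumes fin: "finite Ms" and der: "\<And>j u. (\<psi> j has_real_derivative \<psi>' j u) (at u)"
    and S: "S \<subseteq> Ms"
  shows "pdiffs S (\<lambda>x. complex_of_real (exp (\<Sum>m\<in>Ms. \<psi> m (x m)))) x
     = complex_of_real (exp (\<Sum>m\<in>Ms. \<psi> m (x m))) * (\<Prod>j\<in>S. complex_of_real (\<psi>' j (x j)))"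
proof -
  have fS: "finite S" using fin S finite_subset by auto
  show ?thesis unfolding pdiffs_def
    using pdiff_foldr_exp[OF fin der, of "sorted_list_of_set S"] fS S by simp
qed

lemma K1_exp_x:
  assumes "hb > 0"
  shows "K1 hb mu g N x y = complex_of_real (exp (\<Sum>m<N. (\<Sum>n<N - 1. (- g / hb) * ln (2 * cosh (mu * (x m - y n) / 2)))))"
proof -
  have "(\<Prod>m<N. \<Prod>n<N - 1. (2 * cosh (mu * (x m - y n) / 2)) powr (- g / hb))
      = (\<Prod>m<N. \<Prod>n<N - 1. exp ((- g / hb) * ln (2 * cosh (mu * (x m - y n) / 2))))"
    using cosh_real_pos by (intro prod.cong refl) (simp add: powr_def mult.commute)
  also have "\<dots> = exp (\<Sum>m<N. (\<Sum>n<N - 1. (- g / hb) * ln (2 * cosh (mu * (x m - y n) / 2))))"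
    by (simp add: exp_sum)
  finally show ?thesis unfolding K1_def by simp
qed

lemma K1_exp_y:
  assumes "hb > 0"
  shows "K1 hb mu g N x y = complex_of_real (exp (\<Sum>n<N - 1. (\<Sum>m<N. (- g / hb) * ln (2 * cosh (mu * (x m - y n) / 2)))))"
  unfolding K1_exp_x[OF assms] by (subst sum.swap) simp

abbreviation cc :: "real \<Rightarrow> real \<Rightarrow> complex" where
  "cc mu g \<equiv> \<i> * complex_of_real (mu * g) / 2"

lemma Lnr_off_eq: "Lnr_off mu g x j l = cc mu g * complex_of_real (1 / sinh (mu * (x j - x l) / 2))"
proof (cases "sinh (mu * (x j - x l) / 2) = 0")
  case True
  thus ?thesis unfolding Lnr_off_def by simp
next
  case False
  hence "complex_of_real (sinh (mu * (x j - x l) / 2)) \<noteq> 0" by simp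
  thus ?thesis unfolding Lnr_off_def of_real_mult of_real_divide by (simp add: field_simps)
qed

lemma zE_eq: "zE mu g n x j = - cc mu g * complex_of_real (\<Sum>l\<in>{..<n} - {j}. coth (mu * (x j - x l) / 2))"
  unfolding zE_def by (simp add: of_real_sum)

lemma neg_arg: "mu * (- a - - b) / 2 = - (mu * (a - b) / 2)" for mu a b :: real
  by (simp add: field_simps)

lemma sigma_op_x:
  assumes hb: "hb > 0"
  shows "sigma_op hb mu g N k (\<lambda>x'. K1 hb mu g N x' y) x
       = K1 hb mu g N x y * (cc mu g ^ k * complex_of_real (Ek N k (Rx N mu x y)))"
proof -
  define \<psi> where "\<psi> m u = (\<Sum>n<N - 1. (- g / hb) * ln (2 * cosh (mu * (u - y n) / 2)))" for m :: nat and u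
  define \<psi>' where "\<psi>' m u = (\<Sum>n<N - 1. (- g / hb) * ((mu / 2) * tanh (mu * (u - y n) / 2)))" for m :: nat and u
  have der: "(\<psi> j has_real_derivative \<psi>' j u) (at u)" for j u
    unfolding \<psi>_def \<psi>'_def by (intro DERIV_sum DERIV_cmult dlog)
  have Kf: "(\<lambda>x'. K1 hb mu g N x' y) = (\<lambda>x'. complex_of_real (exp (\<Sum>m<N. \<psi> m (x' m))))"
    unfolding K1_exp_x[OF hb] \<psi>_def ..
  define p where "p j = cc mu g * complex_of_real (\<Sum>q<N - 1. tanh (mu * (x j - y q) / 2))" for j
  have pj: "- \<i> * complex_of_real hb * complex_of_real (\<psi>' j (x j)) = p j" for j
  proof -
    define T where "T = (\<Sum>q<N - 1. tanh (mu * (x j - y q) / 2))"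
    have "\<psi>' j (x j) = (- g / hb) * (mu / 2) * T"
      unfolding \<psi>'_def T_def by (simp add: sum_distrib_left mult.assoc)
    hence r: "hb * \<psi>' j (x j) = - (mu * g / 2 * T)" using hb by (simp add: field_simps)
    have "- \<i> * complex_of_real hb * complex_of_real (\<psi>' j (x j)) = - \<i> * complex_of_real (hb * \<psi>' j (x j))"
      by simp
    also have "\<dots> = cc mu g * complex_of_real T" unfolding r by (simp add: of_real_mult)
    finally show ?thesis unfolding p_def T_def .
  qed
  have "sigma_op hb mu g N k (\<lambda>x'. K1 hb mu g N x' y) x
      = (\<Sum>S\<in>Pow {..<N}. sigma_coeff mu g N k S x * (- \<i> * complex_of_real hb) ^ card S *
          (K1 hb mu g N x y * (\<Prod>j\<in>S. complex_of_real (\<psi>' j (x j)))))"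
    unfolding sigma_op_def
  proof (intro sum.cong refl)
    fix S assume "S \<in> Pow {..<N}"
    hence "pdiffs S (\<lambda>x'. K1 hb mu g N x' y) x = K1 hb mu g N x y * (\<Prod>j\<in>S. complex_of_real (\<psi>' j (x j)))"
      unfolding Kf fun_cong[OF Kf, of x] using pdiffs_exp[OF _ der, where S=S and x=x] by auto
    thus "sigma_coeff mu g N k S x * (- \<i> * complex_of_real hb) ^ card S * pdiffs S (\<lambda>x'. K1 hb mu g N x' y) x
       = sigma_coeff mu g N k S x * (- \<i> * complex_of_real hb) ^ card S * (K1 hb mu g N x y * (\<Prod>j\<in>S. complex_of_real (\<psi>' j (x j))))"
      by simp
  qed
  also have "\<dots> = K1 hb mu g N x y * (\<Sum>S\<in>Pow {..<N}. sigma_coeff mu g N k S x * (\<Prod>j\<in>S. p j))"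
  proof -
    have "(- \<i> * complex_of_real hb) ^ card S * (\<Prod>j\<in>S. complex_of_real (\<psi>' j (x j))) = (\<Prod>j\<in>S. p j)"
      if "S \<in> Pow {..<N}" for S
      by (simp only: pj[symmetric] prod.distrib prod_constant power_mult_distrib)
    thus ?thesis by (simp add: sum_distrib_left mult_ac)
  qed
  also have "(\<Sum>S\<in>Pow {..<N}. sigma_coeff mu g N k S x * (\<Prod>j\<in>S. p j))
      = Ek N k (\<lambda>j l. M0 mu g N x j l + (if j = l then p j else 0))" by (rule sigma_sum)
  also have "(\<lambda>j l. M0 mu g N x j l + (if j = l then p j else 0)) = (\<lambda>j l. cc mu g * complex_of_real (Rx N mu x y j l))"
  proof (intro ext)
    fix j l
    show "M0 mu g N x j l + (if j = l then p j else 0) = cc mu g * complex_of_real (Rx N mu x y j l)"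
    proof (cases "j = l")
      case True
      thus ?thesis unfolding M0_def Rx_def zE_eq p_def by (simp add: algebra_simps)
    next
      case False
      thus ?thesis unfolding M0_def Rx_def Lnr_off_eq by simp
    qed
  qed
  also have "Ek N k (\<lambda>j l. cc mu g * complex_of_real (Rx N mu x y j l)) = cc mu g ^ k * complex_of_real (Ek N k (Rx N mu x y))"
    by (rule Ek_scale)
  finally show ?thesis .
qed

lemma sigma_op_y:
  assumes hb: "hb > 0"
  shows "sigma_op_neg hb mu g (N - 1) k (\<lambda>y'. K1 hb mu g N x y') y
       = K1 hb mu g N x y * (cc mu g ^ k * complex_of_real (Ek (N - 1) k (Ry N mu x y)))"
proof -
  define \<psi> where "\<psi> n v = (\<Sum>m<N. (- g / hb) * ln (2 * cosh (mu * (x m - v) / 2)))" for n :: nat and v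
  define \<psi>' where "\<psi>' n v = (\<Sum>m<N. (- g / hb) * (- (mu / 2) * tanh (mu * (x m - v) / 2)))" for n :: nat and v
  have der: "(\<psi> j has_real_derivative \<psi>' j u) (at u)" for j u
    unfolding \<psi>_def \<psi>'_def by (intro DERIV_sum DERIV_cmult dlog2)
  have Kf: "(\<lambda>y'. K1 hb mu g N x y') = (\<lambda>y'. complex_of_real (exp (\<Sum>n<N - 1. \<psi> n (y' n))))"
    unfolding K1_exp_y[OF hb] \<psi>_def ..
  define p where "p n = cc mu g * complex_of_real (\<Sum>i<N. tanh (mu * (x i - y n) / 2))" for n
  have pj: "- \<i> * complex_of_real hb * (-1) * complex_of_real (\<psi>' j (y j)) = p j" for j
  proof -
    define T where "T = (\<Sum>i<N. tanh (mu * (x i - y j) / 2))"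
    have "\<psi>' j (y j) = (- g / hb) * (- (mu / 2)) * T"
      unfolding \<psi>'_def T_def by (simp add: sum_distrib_left mult.assoc)
    hence r: "hb * \<psi>' j (y j) = mu * g / 2 * T" using hb by (simp add: field_simps)
    have "- \<i> * complex_of_real hb * (-1) * complex_of_real (\<psi>' j (y j)) = \<i> * complex_of_real (hb * \<psi>' j (y j))"
      by simp
    also have "\<dots> = cc mu g * complex_of_real T" unfolding r by (simp add: of_real_mult)
    finally show ?thesis unfolding p_def T_def .
  qed
  have "sigma_op_neg hb mu g (N - 1) k (\<lambda>y'. K1 hb mu g N x y') y
      = (\<Sum>S\<in>Pow {..<N - 1}. sigma_coeff mu g (N - 1) k S (\<lambda>j. - y j) * (- \<i> * complex_of_real hb) ^ card S * (-1) ^ card S *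
          (K1 hb mu g N x y * (\<Prod>j\<in>S. complex_of_real (\<psi>' j (y j)))))"
    unfolding sigma_op_neg_def
  proof (intro sum.cong refl)
    fix S assume "S \<in> Pow {..<N - 1}"
    hence "pdiffs S (\<lambda>y'. K1 hb mu g N x y') y = K1 hb mu g N x y * (\<Prod>j\<in>S. complex_of_real (\<psi>' j (y j)))"
      unfolding Kf fun_cong[OF Kf, of y] using pdiffs_exp[OF _ der, where S=S and x=y] by auto
    thus "sigma_coeff mu g (N - 1) k S (\<lambda>j. - y j) * (- \<i> * complex_of_real hb) ^ card S * (-1) ^ card S * pdiffs S (\<lambda>y'. K1 hb mu g N x y') y
       = sigma_coeff mu g (N - 1) k S (\<lambda>j. - y j) * (- \<i> * complex_of_real hb) ^ card S * (-1) ^ card S * (K1 hb mu g N x y * (\<Prod>j\<in>S. complex_of_real (\<psi>' j (y j))))"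
      by simp
  qed
  also have "\<dots> = K1 hb mu g N x y * (\<Sum>S\<in>Pow {..<N - 1}. sigma_coeff mu g (N - 1) k S (\<lambda>j. - y j) * (\<Prod>j\<in>S. p j))"
  proof -
    have "(- \<i> * complex_of_real hb) ^ card S * (-1) ^ card S * (\<Prod>j\<in>S. complex_of_real (\<psi>' j (y j))) = (\<Prod>j\<in>S. p j)"
      if "S \<in> Pow {..<N - 1}" for S
      by (simp only: pj[symmetric] prod.distrib prod_constant power_mult_distrib)
    hence "sigma_coeff mu g (N - 1) k S (\<lambda>j. - y j) * (- \<i> * complex_of_real hb) ^ card S * (-1) ^ card S *
          (K1 hb mu g N x y * (\<Prod>j\<in>S. complex_of_real (\<psi>' j (y j))))
        = K1 hb mu g N x y * (sigma_coeff mu g (N - 1) k S (\<lambda>j. - y j) * (\<Prod>j\<in>S. p j))"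
      if "S \<in> Pow {..<N - 1}" for S
    proof -
      have "sigma_coeff mu g (N - 1) k S (\<lambda>j. - y j) * (- \<i> * complex_of_real hb) ^ card S * (-1) ^ card S *
          (K1 hb mu g N x y * (\<Prod>j\<in>S. complex_of_real (\<psi>' j (y j))))
        = K1 hb mu g N x y * (sigma_coeff mu g (N - 1) k S (\<lambda>j. - y j) * ((- \<i> * complex_of_real hb) ^ card S * (-1) ^ card S * (\<Prod>j\<in>S. complex_of_real (\<psi>' j (y j)))))"
        by (simp only: mult_ac)
      also have "\<dots> = K1 hb mu g N x y * (sigma_coeff mu g (N - 1) k S (\<lambda>j. - y j) * (\<Prod>j\<in>S. p j))"
        using that \<open>\<And>S. S \<in> Pow {..<N - 1} \<Longrightarrow> _\<close> by simp
      finally show ?thesis .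
    qed
    thus ?thesis by (subst sum_distrib_left) (rule sum.cong[OF refl])
  qed
  also have "(\<Sum>S\<in>Pow {..<N - 1}. sigma_coeff mu g (N - 1) k S (\<lambda>j. - y j) * (\<Prod>j\<in>S. p j))
      = Ek (N - 1) k (\<lambda>j l. M0 mu g (N - 1) (\<lambda>j. - y j) j l + (if j = l then p j else 0))" by (rule sigma_sum)
  also have "(\<lambda>j l. M0 mu g (N - 1) (\<lambda>j. - y j) j l + (if j = l then p j else 0)) = (\<lambda>j l. cc mu g * complex_of_real (Ry N mu x y j l))"
  proof (intro ext)
    fix j l
    show "M0 mu g (N - 1) (\<lambda>j. - y j) j l + (if j = l then p j else 0) = cc mu g * complex_of_real (Ry N mu x y j l)"
    proof (cases "j = l")
      case True
      thus ?thesis unfolding M0_def Ry_def zE_eq p_def neg_arg coth_minus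
        by (simp add: algebra_simps sum_negf)
    next
      case False
      thus ?thesis unfolding M0_def Ry_def Lnr_off_eq neg_arg by simp
    qed
  qed
  also have "Ek (N - 1) k (\<lambda>j l. cc mu g * complex_of_real (Ry N mu x y j l)) = cc mu g ^ k * complex_of_real (Ek (N - 1) k (Ry N mu x y))"
    by (rule Ek_scale)
  finally show ?thesis .
qed

theorem proposition4p5:
  fixes hb mu g :: real and N :: nat and x y :: "nat \<Rightarrow> real"
  assumes "hb > 0" and "mu > 0" and "g > 0" and "N \<ge> 1"
    and "inj_on x {..<N}" and "inj_on y {..<N - 1}"
  shows "sigma_op hb mu g N N (\<lambda>x'. K1 hb mu g N x' y) x = 0
     \<and> (\<forall>k\<in>{1..N - 1}.
          sigma_op hb mu g N k (\<lambda>x'. K1 hb mu g N x' y) x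
          - sigma_op_neg hb mu g (N - 1) k (\<lambda>y'. K1 hb mu g N x y') y = 0)"
proof -
  obtain m where N: "N = Suc m" using assms(4) by (cases N) auto
  have ix: "inj_on x {..<Suc m}" and iy: "inj_on y {..<m}" using assms(5,6) N by auto
  have ixm: "inj_on x {..<m}" using ix by (rule inj_on_subset) auto
  have inter: "\<And>j n. j < Suc m \<Longrightarrow> n < m \<Longrightarrow>
      (\<Sum>l<Suc m. Rx (Suc m) mu x y j l * Cc mu x y l n) = (\<Sum>q<m. Cc mu x y j q * Ry (Suc m) mu x y n q)"
    by (rule intertwine[OF assms(2) ix iy])
  have detC: "det (mat m m (\<lambda>(i,j). Cc mu x y i j)) \<noteq> 0"
    by (rule cauchy_det[OF assms(2) ixm iy])
  note tr = trace_eq[of m mu x y]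
  have E1: "Ek (Suc m) (Suc m) (Rx (Suc m) mu x y) = 0"
    by (rule partA_Ek(1)[where A="Rx (Suc m) mu x y" and B="Ry (Suc m) mu x y" and C="Cc mu x y"])
       (fact inter, fact detC, fact tr)
  have E1': "Ek N N (Rx N mu x y) = 0" using E1 N by simp
  have X1: "sigma_op hb mu g N N (\<lambda>x'. K1 hb mu g N x' y) x
        = K1 hb mu g N x y * (cc mu g ^ N * complex_of_real (Ek N N (Rx N mu x y)))"
    by (rule sigma_op_x[OF assms(1)])
  have P1: "sigma_op hb mu g N N (\<lambda>x'. K1 hb mu g N x' y) x = 0"
    unfolding X1 E1' by (simp only: of_real_0 mult_zero_right)
  have P2: "sigma_op hb mu g N k (\<lambda>x'. K1 hb mu g N x' y) x
          - sigma_op_neg hb mu g (N - 1) k (\<lambda>y'. K1 hb mu g N x y') y = 0" if k: "k \<in> {1..N - 1}" for k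
  proof -
    have k1: "1 \<le> k" "k \<le> m" using k N by auto
    have e: "Ek (Suc m) k (Rx (Suc m) mu x y) = Ek m k (Ry (Suc m) mu x y)" 
      by (rule partA_Ek(2)[where A="Rx (Suc m) mu x y" and B="Ry (Suc m) mu x y" and C="Cc mu x y"])
         (fact inter, fact detC, fact tr, fact k1(1), fact k1(2))
    have e': "Ek N k (Rx N mu x y) = Ek (N - 1) k (Ry N mu x y)" using e N by simp
    have X: "sigma_op hb mu g N k (\<lambda>x'. K1 hb mu g N x' y) x
        = K1 hb mu g N x y * (cc mu g ^ k * complex_of_real (Ek N k (Rx N mu x y)))"
      by (rule sigma_op_x[OF assms(1)])
    have Y: "sigma_op_neg hb mu g (N - 1) k (\<lambda>y'. K1 hb mu g N x y') y
        = K1 hb mu g N x y * (cc mu g ^ k * complex_of_real (Ek (N - 1) k (Ry N mu x y)))"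
      by (rule sigma_op_y[OF assms(1)])
    show ?thesis unfolding X Y e' by (rule diff_self)
  qed
  show ?thesis using P1 P2 by blast
qed

end
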